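(* Let $D$ be an E-simple domain with maximal subfield $K$, and let $R=R(D)$. Let $f\in D\setminus K$ be such that $R/\mathfrak p_f$ is a discrete valuation ring in which the image of $\frac1f$ is irreducible. Then for $g\in D\setminus\{0\}$, we have $\frac1g\notin\mathfrak p_f$ if and only if $g\in K[f]$. In particular, $R(D)=R(K[f])+\mathfrak p_f$ and $R(K[f])\cap\mathfrak p_f=(0)$.
   Context: For an integral domain $A$ with fraction field $F$, the reciprocal complement $R(A)$ is the subring of $F$ generated by all $1/a$, $a\in A\setminus\{0\}$ (here $R(K[f])\subseteq R(D)\subseteq\operatorname{Frac}D$). An element $d\in D$ is Egyptian if $d\in R(D)$. $D$ is E-simple if every Egyptian element is a unit; then the Egyptian elements together with $0$ form a subfield $K$, the maximal subfield. For nonzero $f\in D$, $\mathfrak p_f$ denotes the unique prime ideal of $R(D)$ maximal with respect to not containing $1/f$. *)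

theory Defs
  imports "HOL-Algebra.Algebra"
begin

(* All rings are subrings of a fixed ambient field 'k (which contains Frac D). *)

definition is_subring_set :: "'k::field set \<Rightarrow> bool" where
  "is_subring_set S \<longleftrightarrow> 0 \<in> S \<and> 1 \<in> S \<and>
     (\<forall>x\<in>S. \<forall>y\<in>S. x + y \<in> S \<and> x * y \<in> S) \<and> (\<forall>x\<in>S. - x \<in> S)"

definition gen_subring :: "'k::field set \<Rightarrow> 'k set" where
  "gen_subring Y = {x. \<forall>T. is_subring_set T \<and> (\<forall>y\<in>Y. y \<in> T) \<longrightarrow> x \<in> T}"

definition recip_compl :: "'k::field set \<Rightarrow> 'k set" where
  "recip_compl A = gen_subring {inverse a | a. a \<in> A \<and> a \<noteq> 0}"

definition egyptian :: "'k::field set \<Rightarrow> 'k \<Rightarrow> bool" where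
  "egyptian D d \<longleftrightarrow> d \<in> D \<and> d \<in> recip_compl D"

definition E_simple :: "'k::field set \<Rightarrow> bool" where
  "E_simple D \<longleftrightarrow> (\<forall>d. egyptian D d \<and> d \<noteq> 0 \<longrightarrow> inverse d \<in> D)"

definition max_subfield :: "'k::field set \<Rightarrow> 'k set" where
  "max_subfield D = {d. egyptian D d} \<union> {0}"

definition adjoin :: "'k::field set \<Rightarrow> 'k \<Rightarrow> 'k set" where
  "adjoin K f = gen_subring (K \<union> {f})"

definition ring_of :: "'k::field set \<Rightarrow> 'k ring" where
  "ring_of S = \<lparr>carrier = S, monoid.mult = (*), one = 1, ring.zero = 0, ring.add = (+)\<rparr>"

definition DVR :: "('a, 'b) ring_scheme \<Rightarrow> bool" where
  "DVR A \<longleftrightarrow> principal_domain A \<and> \<not> field A \<and> (\<exists>!M. maximalideal M A)"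

(* P is a prime ideal of R(D) maximal with respect to not containing 1/f
   (such a prime is unique; it is \<p>_f) *)
definition is_pf :: "'k::field set \<Rightarrow> 'k \<Rightarrow> 'k set \<Rightarrow> bool" where
  "is_pf D f P \<longleftrightarrow> primeideal P (ring_of (recip_compl D)) \<and> inverse f \<notin> P \<and>
     (\<forall>Q. primeideal Q (ring_of (recip_compl D)) \<and> inverse f \<notin> Q \<and> (\<forall>y\<in>P. y \<in> Q) \<longrightarrow> Q = P)"

end

theory Submission
  imports Defs
begin


lemma (in principal_domain) dvr_pow:
  assumes uniq: "\<exists>!M. maximalideal M R" and tc: "t \<in> carrier R" and ti: "ring_irreducible t"
    and a: "a \<in> carrier R" "a \<noteq> \<zero>"
  shows "\<exists>(n::nat) u. u \<in> Units R \<and> a = t [^] n \<otimes> u"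
proof -
  have assoc: "\<exists>u\<in>Units R. x = t \<otimes> u" if x: "x \<in> carrier R" "ring_irreducible x" for x
  proof -
    have "maximalideal (PIdl x) R" using irreducible_imp_maximalideal x by blast
    moreover have "maximalideal (PIdl t) R" using irreducible_imp_maximalideal tc ti by blast
    ultimately have "PIdl x = PIdl t" using uniq by blast
    hence "x \<sim> t" using associated_iff_same_ideal x(1) tc by simp
    then obtain u where "u \<in> Units R" "x = u \<otimes> t" using ring_associated_iff x(1) tc by blast
    thus ?thesis using m_comm tc by (metis Units_closed)
  qed
  have main: "\<And>fs. set fs \<subseteq> carrier R - {\<zero>} \<Longrightarrow> (\<forall>x\<in>set fs. irreducible (mult_of R) x) \<Longrightarrow>
      \<exists>(n::nat) u. u \<in> Units R \<and> foldr (\<otimes>) fs \<one> = t [^] n \<otimes> u"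
  proof -
    fix fs show "set fs \<subseteq> carrier R - {\<zero>} \<Longrightarrow> (\<forall>x\<in>set fs. irreducible (mult_of R) x) \<Longrightarrow>
      \<exists>(n::nat) u. u \<in> Units R \<and> foldr (\<otimes>) fs \<one> = t [^] n \<otimes> u"
    proof (induction fs)
      case Nil
      then show ?case by (intro exI[of _ "0::nat"] exI[of _ \<one>]) auto
    next
      case (Cons x fs)
      then obtain n :: nat and u where nu: "u \<in> Units R" "foldr (\<otimes>) fs \<one> = t [^] n \<otimes> u" by auto
      have xc: "x \<in> carrier R" "x \<noteq> \<zero>" using Cons.prems by auto
      have "ring_irreducible x" using ring_irreducibleI' xc Cons.prems by auto
      then obtain v where v: "v \<in> Units R" "x = t \<otimes> v" using assoc xc by blast
      have "foldr (\<otimes>) (x # fs) \<one> = (t \<otimes> v) \<otimes> (t [^] n \<otimes> u)" using nu v by simp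
      also have "\<dots> = t [^] Suc n \<otimes> (v \<otimes> u)"
        using tc v(1) nu(1) by (simp add: Units_closed m_ac)
      finally show ?case using v(1) nu(1) by blast
    qed
  qed
  show ?thesis
  proof (cases "a \<in> Units R")
    case True
    then show ?thesis by (intro exI[of _ "0::nat"] exI[of _ a]) auto
  next
    case False
    then have "a \<in> carrier (mult_of R)" "a \<notin> Units (mult_of R)" using a by auto
    then obtain fs where fs: "set fs \<subseteq> carrier (mult_of R)" "factors (mult_of R) fs a"
      using mult_of.factors_exist by blast
    have "foldr (\<otimes>) fs \<one> = a" using fs(2) unfolding factors_def by simp
    moreover have "\<forall>x\<in>set fs. irreducible (mult_of R) x" using fs(2) unfolding factors_def by simp
    ultimately show ?thesis using main fs(1) by force
  qed
qed




lemma ring_of_simps [simp]: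
  "carrier (ring_of S) = S" "monoid.mult (ring_of S) = (*)" "one (ring_of S) = 1"
  "ring.zero (ring_of S) = 0" "ring.add (ring_of S) = (+)"
  by (simp_all add: ring_of_def)

lemma cring_ring_of:
  assumes "is_subring_set S" shows "cring (ring_of S)"
proof -
  have S: "0 \<in> S" "1 \<in> S" "\<And>x y. x \<in> S \<Longrightarrow> y \<in> S \<Longrightarrow> x + y \<in> S"
    "\<And>x y. x \<in> S \<Longrightarrow> y \<in> S \<Longrightarrow> x * y \<in> S" "\<And>x. x \<in> S \<Longrightarrow> - x \<in> S"
    using assms unfolding is_subring_set_def by auto
  show ?thesis
  proof (rule cringI)
    show "abelian_group (ring_of S)"
    proof (rule abelian_groupI)
      fix x assume "x \<in> carrier (ring_of S)"
      thus "\<exists>y\<in>carrier (ring_of S). y \<oplus>\<^bsub>ring_of S\<^esub> x = \<zero>\<^bsub>ring_of S\<^esub>"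
        using S by (intro bexI[of _ "-x"]) auto
    qed (use S in \<open>auto simp: algebra_simps\<close>)
    show "Group.comm_monoid (ring_of S)"
      by (rule comm_monoidI) (use S in \<open>auto simp: algebra_simps\<close>)
  qed (auto simp: algebra_simps)
qed

lemma P_facts:
  fixes R P :: "'k::field set"
  assumes R: "is_subring_set R" and pi: "primeideal P (ring_of R)"
  shows "P \<subseteq> R" "0 \<in> P" "\<And>x y. x \<in> P \<Longrightarrow> y \<in> P \<Longrightarrow> x + y \<in> P"
    "\<And>x r. x \<in> P \<Longrightarrow> r \<in> R \<Longrightarrow> r * x \<in> P"
    "\<And>x y. x \<in> R \<Longrightarrow> y \<in> R \<Longrightarrow> x * y \<in> P \<Longrightarrow> x \<in> P \<or> y \<in> P"
    "1 \<notin> P"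
proof -
  interpret primeideal P "ring_of R" by fact
  show "P \<subseteq> R" using a_subset by simp
  show "0 \<in> P" using additive_subgroup.zero_closed[OF additive_subgroup_axioms] by simp
  show "x + y \<in> P" if "x \<in> P" "y \<in> P" for x y
  proof -
    have "x \<oplus>\<^bsub>ring_of R\<^esub> y \<in> P" by (rule additive_subgroup.a_closed[OF additive_subgroup_axioms that])
    thus ?thesis by simp
  qed
  show "r * x \<in> P" if "x \<in> P" "r \<in> R" for x r
  proof -
    have "r \<otimes>\<^bsub>ring_of R\<^esub> x \<in> P" by (rule I_l_closed) (use that in simp_all)
    thus ?thesis by simp
  qed
  show "x \<in> P \<or> y \<in> P" if "x \<in> R" "y \<in> R" "x * y \<in> P" for x y
    by (rule I_prime) (use that in simp_all)
  show "1 \<notin> P"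
  proof
    assume "1 \<in> P"
    have "r \<in> P" if "r \<in> R" for r
    proof -
      have "r \<otimes>\<^bsub>ring_of R\<^esub> 1 \<in> P" by (rule I_l_closed) (use that \<open>1 \<in> P\<close> in simp_all)
      thus ?thesis by simp
    qed
    hence "R \<subseteq> P" by blast
    thus False using I_notcarr a_subset by auto
  qed
qed


lemma dvr_concrete:
  fixes R P :: "'k::field set" and t :: 'k
  assumes R: "is_subring_set R" and pi: "primeideal P (ring_of R)"
    and dvr: "DVR (ring_of R Quot P)"
    and irr: "ring_irreducible\<^bsub>ring_of R Quot P\<^esub> (P +>\<^bsub>ring_of R\<^esub> t)" and tR: "t \<in> R"
  shows "\<forall>x\<in>R. x \<notin> P \<longrightarrow> (\<exists>n u v. u \<in> R \<and> v \<in> R \<and> u * v - 1 \<in> P \<and> x - t ^ n * u \<in> P)"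
    and "\<forall>y\<in>R. t * y - 1 \<notin> P"
proof -
  let ?A = "ring_of R"
  let ?W = "ring_of R Quot P"
  let ?p = "(+>\<^bsub>?A\<^esub>) P"
  interpret A: cring ?A using cring_ring_of[OF R] .
  interpret primeideal P ?A by fact
  interpret W: domain ?W by (rule quotient_is_domain)
  interpret h: ring_hom_cring ?A ?W ?p by (rule rcos_ring_hom_cring)
  note Pf = P_facts[OF R pi]
  have Rneg: "- x \<in> R" if "x \<in> R" for x using R that unfolding is_subring_set_def by auto
  have Radd: "x + y \<in> R" "x * y \<in> R" if "x \<in> R" "y \<in> R" for x y
    using R that unfolding is_subring_set_def by auto
  have Rpow: "x ^ n \<in> R" if "x \<in> R" for x n
    by (induction n) (use R that Radd in \<open>auto simp: is_subring_set_def\<close>)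
  have R1: "1 \<in> R" using R unfolding is_subring_set_def by auto
  have zW: "\<zero>\<^bsub>?W\<^esub> = P" by (simp add: FactRing_def)
  have carrW: "\<exists>a\<in>R. w = ?p a" if "w \<in> carrier ?W" for w
    using that by (auto simp: FactRing_def A_RCOSETS_def RCOSETS_def a_r_coset_def)
  have pz: "x \<in> P" if "x \<in> R" "?p x = P" for x
    using a_rcos_self[of x] that by simp
  have pz2: "?p x = P" if "x \<in> P" for x
    using a_rcos_const[OF that] .
  have eqD: "x - y \<in> P" if "x \<in> R" "y \<in> R" "?p x = ?p y" for x y
  proof -
    have e1: "?p (x \<oplus>\<^bsub>?A\<^esub> (- y)) = ?p x \<oplus>\<^bsub>?W\<^esub> ?p (- y)"
      by (rule h.hom_add) (simp_all add: that Rneg)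
    have e2: "?p (y \<oplus>\<^bsub>?A\<^esub> (- y)) = ?p y \<oplus>\<^bsub>?W\<^esub> ?p (- y)"
      by (rule h.hom_add) (simp_all add: that Rneg)
    have e3: "y \<oplus>\<^bsub>?A\<^esub> (- y) = \<zero>\<^bsub>?A\<^esub>" by simp
    have "?p (x \<oplus>\<^bsub>?A\<^esub> (- y)) = ?p (\<zero>\<^bsub>?A\<^esub>)"
      by (simp only: e1 e2 e3 that(3) flip: e2)
    also have "\<dots> = P" using h.hom_zero zW by (simp only:)
    finally have "?p (x + - y) = P" by simp
    moreover have "x + - y \<in> R" using Radd Rneg that by blast
    ultimately have "x + - y \<in> P" using pz by blast
    thus ?thesis by simp
  qed
  have eqI: "?p x = ?p y" if "x \<in> R" "y \<in> R" "x - y \<in> P" for x y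
  proof -
    have "?p x = ?p (y + (x - y))" by simp
    also have "\<dots> = ?p y \<oplus>\<^bsub>?W\<^esub> ?p (x - y)" using h.hom_add[of y "x - y"] that Pf(1) by auto
    also have "\<dots> = ?p y \<oplus>\<^bsub>?W\<^esub> \<zero>\<^bsub>?W\<^esub>" using pz2[OF that(3)] zW by simp
    also have "\<dots> = ?p y" using W.r_zero h.hom_closed that(2) by simp
    finally show ?thesis .
  qed
  have powp: "?p t [^]\<^bsub>?W\<^esub> n = ?p (t ^ n)" for n :: nat
  proof (induction n)
    case 0 then show ?case using h.hom_one by simp
  next
    case (Suc n) then show ?case using h.hom_mult[of "t ^ n" t] Rpow tR by (simp add: mult.commute)
  qed
  have pd: "principal_domain ?W" and uniq: "\<exists>!M. maximalideal M ?W"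
    using dvr unfolding DVR_def by auto
  interpret pd: principal_domain ?W by fact
  have tW: "?p t \<in> carrier ?W" using h.hom_closed tR by simp
  show "\<forall>x\<in>R. x \<notin> P \<longrightarrow> (\<exists>n u v. u \<in> R \<and> v \<in> R \<and> u * v - 1 \<in> P \<and> x - t ^ n * u \<in> P)"
  proof (intro ballI impI)
    fix x assume x: "x \<in> R" "x \<notin> P"
    have "?p x \<in> carrier ?W" "?p x \<noteq> \<zero>\<^bsub>?W\<^esub>" using h.hom_closed x pz zW by auto
    then obtain n :: nat and u where nu: "u \<in> Units ?W" "?p x = ?p t [^]\<^bsub>?W\<^esub> n \<otimes>\<^bsub>?W\<^esub> u"
      using pd.dvr_pow[OF uniq tW irr] by blast
    obtain v where v: "v \<in> carrier ?W" "u \<otimes>\<^bsub>?W\<^esub> v = \<one>\<^bsub>?W\<^esub>" "u \<in> carrier ?W"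
      using nu(1) unfolding Units_def by blast
    obtain u0 where u0: "u0 \<in> R" "u = ?p u0" using carrW v(3) by blast
    obtain v0 where v0: "v0 \<in> R" "v = ?p v0" using carrW v(1) by blast
    have "?p (u0 * v0) = ?p 1" using v(2) h.hom_mult[of u0 v0] h.hom_one u0 v0 by simp
    hence 1: "u0 * v0 - 1 \<in> P" by (rule eqD[OF Radd(2)[OF u0(1) v0(1)] R1])
    have "?p x = ?p (t ^ n * u0)" using nu(2) powp h.hom_mult[of "t^n" u0] u0 Rpow tR by simp
    hence 2: "x - t ^ n * u0 \<in> P" by (rule eqD[OF x(1) Radd(2)[OF Rpow[OF tR] u0(1)]])
    show "\<exists>n u v. u \<in> R \<and> v \<in> R \<and> u * v - 1 \<in> P \<and> x - t ^ n * u \<in> P"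
      using 1 2 u0 v0 by blast
  qed
  show "\<forall>y\<in>R. t * y - 1 \<notin> P"
  proof (intro ballI notI)
    fix y assume y: "y \<in> R" "t * y - 1 \<in> P"
    have "?p (t * y) = ?p 1" by (rule eqI[OF Radd(2)[OF tR y(1)] R1 y(2)])
    hence "?p t \<otimes>\<^bsub>?W\<^esub> ?p y = \<one>\<^bsub>?W\<^esub>" using h.hom_mult[of t y] h.hom_one tR y by simp
    moreover have yW: "?p y \<in> carrier ?W" using h.hom_closed[of y] y by simp
    ultimately have "?p t \<in> Units ?W"
      using W.m_comm[OF tW yW] tW unfolding Units_def by auto
    thus False using W.ring_irreducibleE(4)[OF tW irr] by simp
  qed
qed




lemma is_subring_setI:
  assumes "0 \<in> S" "1 \<in> S" "\<And>x y. x \<in> S \<Longrightarrow> y \<in> S \<Longrightarrow> x + y \<in> S"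
    "\<And>x y. x \<in> S \<Longrightarrow> y \<in> S \<Longrightarrow> x * y \<in> S" "\<And>x. x \<in> S \<Longrightarrow> - x \<in> S"
  shows "is_subring_set S"
  using assms unfolding is_subring_set_def by auto

lemma gs_subring: "is_subring_set (gen_subring Y)"
proof -
  have m: "x \<in> gen_subring Y \<longleftrightarrow> (\<forall>T. is_subring_set T \<and> (\<forall>y\<in>Y. y \<in> T) \<longrightarrow> x \<in> T)" for x
    unfolding gen_subring_def by simp
  show ?thesis
  proof (rule is_subring_setI)
    show "0 \<in> gen_subring Y" "1 \<in> gen_subring Y" unfolding m is_subring_set_def by simp_all
    show "x + y \<in> gen_subring Y" if "x \<in> gen_subring Y" "y \<in> gen_subring Y" for x y
      using that unfolding m is_subring_set_def by simp
    show "x * y \<in> gen_subring Y" if "x \<in> gen_subring Y" "y \<in> gen_subring Y" for x y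
      using that unfolding m is_subring_set_def by simp
    show "- x \<in> gen_subring Y" if "x \<in> gen_subring Y" for x
      using that unfolding m is_subring_set_def by simp
  qed
qed

lemma gs_gen: "y \<in> Y \<Longrightarrow> y \<in> gen_subring Y"
  unfolding gen_subring_def by simp

lemma gs_min: "is_subring_set T \<Longrightarrow> Y \<subseteq> T \<Longrightarrow> gen_subring Y \<subseteq> T"
  unfolding gen_subring_def by blast

lemma sub_closed:
  assumes "is_subring_set S"
  shows "0 \<in> S" "1 \<in> S" "\<And>x y. x \<in> S \<Longrightarrow> y \<in> S \<Longrightarrow> x + y \<in> S"
    "\<And>x y. x \<in> S \<Longrightarrow> y \<in> S \<Longrightarrow> x * y \<in> S" "\<And>x. x \<in> S \<Longrightarrow> - x \<in> S"
    "\<And>x y. x \<in> S \<Longrightarrow> y \<in> S \<Longrightarrow> x - y \<in> S"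
proof -
  have h: "0 \<in> S" "1 \<in> S" "\<forall>x\<in>S. \<forall>y\<in>S. x + y \<in> S \<and> x * y \<in> S" "\<forall>x\<in>S. - x \<in> S"
    using assms unfolding is_subring_set_def by blast+
  show "0 \<in> S" "1 \<in> S" by (fact h(1), fact h(2))
  show "\<And>x y. x \<in> S \<Longrightarrow> y \<in> S \<Longrightarrow> x + y \<in> S" "\<And>x y. x \<in> S \<Longrightarrow> y \<in> S \<Longrightarrow> x * y \<in> S"
    "\<And>x. x \<in> S \<Longrightarrow> - x \<in> S" using h(3,4) by blast+
  show "\<And>x y. x \<in> S \<Longrightarrow> y \<in> S \<Longrightarrow> x - y \<in> S"
  proof -
    fix x y assume "x \<in> S" "y \<in> S"
    hence "x + - y \<in> S" using h(3,4) by blast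
    thus "x - y \<in> S" by simp
  qed
qed

lemma sub_pow: "is_subring_set S \<Longrightarrow> x \<in> S \<Longrightarrow> x ^ n \<in> S"
proof (induction n)
  case 0 then show ?case using sub_closed(2) by simp
next
  case (Suc n) then show ?case using sub_closed(4)[of S x "x ^ n"] by simp
qed

locale ctx =
  fixes D :: "'k::field set" and f :: 'k and P :: "'k set"
  assumes D: "is_subring_set D" and Es: "E_simple D" and fD: "f \<in> D"
    and fK: "f \<notin> max_subfield D"
    and Psub: "P \<subseteq> recip_compl D" and P0: "0 \<in> P"
    and Padd: "\<And>x y. x \<in> P \<Longrightarrow> y \<in> P \<Longrightarrow> x + y \<in> P"
    and Pmul: "\<And>x r. x \<in> P \<Longrightarrow> r \<in> recip_compl D \<Longrightarrow> r * x \<in> P"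
    and Pprime: "\<And>x y. x \<in> recip_compl D \<Longrightarrow> y \<in> recip_compl D \<Longrightarrow> x * y \<in> P \<Longrightarrow> x \<in> P \<or> y \<in> P"
    and P1: "1 \<notin> P"
    and tP: "inverse f \<notin> P"
    and dvr: "\<forall>x\<in>recip_compl D. x \<notin> P \<longrightarrow> (\<exists>n u v. u \<in> recip_compl D \<and> v \<in> recip_compl D \<and>
               u * v - 1 \<in> P \<and> x - inverse f ^ n * u \<in> P)"
    and tnu: "\<forall>y\<in>recip_compl D. inverse f * y - 1 \<notin> P"
begin

abbreviation "R \<equiv> recip_compl D"
abbreviation "K \<equiv> max_subfield D"
abbreviation "t \<equiv> inverse f"
definition "G = {g \<in> D. g = 0 \<or> inverse g \<notin> P}"
abbreviation "KF \<equiv> adjoin K f"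
abbreviation "RG \<equiv> recip_compl G"

lemma R_sub: "is_subring_set R"
  unfolding recip_compl_def by (rule gs_subring)

lemmas Rc = sub_closed[OF R_sub]
lemmas Dc = sub_closed[OF D]
lemma R_0 [simp]: "0 \<in> R" by (rule Rc(1))
lemma R_1 [simp]: "1 \<in> R" by (rule Rc(2))
lemma R_add [simp]: "x \<in> R \<Longrightarrow> y \<in> R \<Longrightarrow> x + y \<in> R" by (rule Rc(3))
lemma R_mul [simp]: "x \<in> R \<Longrightarrow> y \<in> R \<Longrightarrow> x * y \<in> R" by (rule Rc(4))
lemma R_neg [simp]: "x \<in> R \<Longrightarrow> - x \<in> R" by (rule Rc(5))
lemma R_diff [simp]: "x \<in> R \<Longrightarrow> y \<in> R \<Longrightarrow> x - y \<in> R" by (rule Rc(6))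
lemma R_pow [simp]: "x \<in> R \<Longrightarrow> x ^ n \<in> R" by (rule sub_pow[OF R_sub])
lemma D_0 [simp]: "0 \<in> D" by (rule Dc(1))
lemma D_1 [simp]: "1 \<in> D" by (rule Dc(2))
lemma D_add [simp]: "x \<in> D \<Longrightarrow> y \<in> D \<Longrightarrow> x + y \<in> D" by (rule Dc(3))
lemma D_mul [simp]: "x \<in> D \<Longrightarrow> y \<in> D \<Longrightarrow> x * y \<in> D" by (rule Dc(4))
lemma D_neg [simp]: "x \<in> D \<Longrightarrow> - x \<in> D" by (rule Dc(5))
lemma D_diff [simp]: "x \<in> D \<Longrightarrow> y \<in> D \<Longrightarrow> x - y \<in> D" by (rule Dc(6))
lemma D_pow [simp]: "x \<in> D \<Longrightarrow> x ^ n \<in> D" by (rule sub_pow[OF D])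

lemma R_inv: "a \<in> D \<Longrightarrow> inverse a \<in> R"
proof (cases "a = 0")
  case True then show ?thesis using Rc(1) by simp
next
  case False
  assume "a \<in> D"
  then show ?thesis unfolding recip_compl_def using False by (intro gs_gen) blast
qed

lemma K_eq: "K = D \<inter> R"
  using Dc(1) Rc(1) unfolding max_subfield_def egyptian_def by auto

lemma K_sub: "is_subring_set K"
  unfolding K_eq by (rule is_subring_setI) (auto simp:)

lemmas Kc = sub_closed[OF K_sub]
lemma K_0 [simp]: "0 \<in> K" by (rule Kc(1))
lemma K_1 [simp]: "1 \<in> K" by (rule Kc(2))
lemma K_add [simp]: "x \<in> K \<Longrightarrow> y \<in> K \<Longrightarrow> x + y \<in> K" by (rule Kc(3))
lemma K_mul [simp]: "x \<in> K \<Longrightarrow> y \<in> K \<Longrightarrow> x * y \<in> K" by (rule Kc(4))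
lemma K_neg [simp]: "x \<in> K \<Longrightarrow> - x \<in> K" by (rule Kc(5))
lemma K_diff [simp]: "x \<in> K \<Longrightarrow> y \<in> K \<Longrightarrow> x - y \<in> K" by (rule Kc(6))
lemma K_pow [simp]: "x \<in> K \<Longrightarrow> x ^ n \<in> K" by (rule sub_pow[OF K_sub])

lemma K_inv: "c \<in> K \<Longrightarrow> inverse c \<in> K"
proof (cases "c = 0")
  case False
  assume c: "c \<in> K"
  hence "egyptian D c" using K_eq unfolding egyptian_def by auto
  hence "inverse c \<in> D" using Es False unfolding E_simple_def by auto
  moreover have "inverse c \<in> R" using R_inv c K_eq by auto
  ultimately show ?thesis using K_eq by auto
qed (use K_eq in auto)

lemma f_nz: "f \<noteq> 0" using fK unfolding max_subfield_def by blast

lemma tR: "t \<in> R" using R_inv fD .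

lemma Pneg: "x \<in> P \<Longrightarrow> - x \<in> P"
proof -
  assume "x \<in> P"
  hence "(- 1) * x \<in> P" using Pmul Rc(2) Rc(5) by blast
  thus ?thesis by simp
qed

lemma Pdiff: "x \<in> P \<Longrightarrow> y \<in> P \<Longrightarrow> x - y \<in> P"
proof -
  assume "x \<in> P" "y \<in> P"
  hence "x + - y \<in> P" using Padd Pneg by blast
  thus ?thesis by simp
qed

lemma Pmul': "x \<in> P \<Longrightarrow> r \<in> R \<Longrightarrow> x * r \<in> P"
  using Pmul[of x r] by (simp add: mult.commute)

lemma PR: "x \<in> P \<Longrightarrow> x \<in> R" using Psub by blast

lemma G_sub: "is_subring_set G"
proof (rule is_subring_setI)
  show "0 \<in> G" "1 \<in> G" using P1 by (auto simp: G_def)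
  show "- x \<in> G" if "x \<in> G" for x
    using that Pneg[of "- inverse x"] by (auto simp: G_def)
  show "x * y \<in> G" if "x \<in> G" "y \<in> G" for x y
    using that Pprime[of "inverse x" "inverse y"] R_inv by (auto simp: G_def inverse_mult_distrib)
  show "x + y \<in> G" if x: "x \<in> G" and y: "y \<in> G" for x y
  proof (cases "x = 0 \<or> y = 0 \<or> x + y = 0")
    case True then show ?thesis using x y by (auto simp: G_def)
  next
    case False
    have xy: "x \<in> D" "y \<in> D" "inverse x \<notin> P" "inverse y \<notin> P" using x y False by (auto simp: G_def)
    have eq: "inverse (x + y) * (inverse x + inverse y) = inverse x * inverse y"
      using False by (simp add: field_simps)
    have "inverse (x + y) \<notin> P"
    proof
      assume "inverse (x + y) \<in> P"
      hence "inverse (x + y) * (inverse x + inverse y) \<in> P"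
        using Pmul' R_inv xy by auto
      hence "inverse x * inverse y \<in> P" using eq by simp
      thus False using Pprime R_inv xy by blast
    qed
    thus ?thesis using xy by (auto simp: G_def)
  qed
qed

lemmas Gc = sub_closed[OF G_sub]
lemma G_0 [simp]: "0 \<in> G" by (rule Gc(1))
lemma G_1 [simp]: "1 \<in> G" by (rule Gc(2))
lemma G_add [simp]: "x \<in> G \<Longrightarrow> y \<in> G \<Longrightarrow> x + y \<in> G" by (rule Gc(3))
lemma G_mul [simp]: "x \<in> G \<Longrightarrow> y \<in> G \<Longrightarrow> x * y \<in> G" by (rule Gc(4))
lemma G_neg [simp]: "x \<in> G \<Longrightarrow> - x \<in> G" by (rule Gc(5))
lemma G_diff [simp]: "x \<in> G \<Longrightarrow> y \<in> G \<Longrightarrow> x - y \<in> G" by (rule Gc(6))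
lemma G_pow [simp]: "x \<in> G \<Longrightarrow> x ^ n \<in> G" by (rule sub_pow[OF G_sub])

lemma G_D: "G \<subseteq> D" by (auto simp: G_def)

lemma KF_sub: "is_subring_set KF" unfolding adjoin_def by (rule gs_subring)
lemma K_KF: "K \<subseteq> KF" unfolding adjoin_def using gs_gen by blast
lemma f_KF: "f \<in> KF" unfolding adjoin_def using gs_gen by blast

lemma K_G: "K \<subseteq> G"
proof
  fix c assume c: "c \<in> K"
  show "c \<in> G"
  proof (cases "c = 0")
    case False
    have "inverse c \<notin> P"
    proof
      assume "inverse c \<in> P"
      hence "c * inverse c \<in> P" using Pmul c K_eq by auto
      thus False using P1 False by simp
    qed
    thus ?thesis using c K_eq by (auto simp: G_def)
  qed (simp add:)
qed

lemma KF_G: "KF \<subseteq> G"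
  unfolding adjoin_def using gs_min[OF G_sub] K_G tP fD by (auto simp: G_def)

lemma RG_sub: "is_subring_set RG" unfolding recip_compl_def by (rule gs_subring)
lemmas RGc = sub_closed[OF RG_sub]
lemma RG_0 [simp]: "0 \<in> RG" by (rule RGc(1))
lemma RG_1 [simp]: "1 \<in> RG" by (rule RGc(2))
lemma RG_add [simp]: "x \<in> RG \<Longrightarrow> y \<in> RG \<Longrightarrow> x + y \<in> RG" by (rule RGc(3))
lemma RG_mul [simp]: "x \<in> RG \<Longrightarrow> y \<in> RG \<Longrightarrow> x * y \<in> RG" by (rule RGc(4))
lemma RG_neg [simp]: "x \<in> RG \<Longrightarrow> - x \<in> RG" by (rule RGc(5))
lemma RG_diff [simp]: "x \<in> RG \<Longrightarrow> y \<in> RG \<Longrightarrow> x - y \<in> RG" by (rule RGc(6))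
lemma RG_pow [simp]: "x \<in> RG \<Longrightarrow> x ^ n \<in> RG" by (rule sub_pow[OF RG_sub])

lemma RG_inv: "g \<in> G \<Longrightarrow> inverse g \<in> RG"
proof (cases "g = 0")
  case True then show ?thesis using RGc(1) by simp
next
  case False
  assume "g \<in> G"
  then show ?thesis unfolding recip_compl_def using False by (intro gs_gen) blast
qed

lemma RG_R: "RG \<subseteq> R"
  unfolding recip_compl_def[of G]
  by (rule gs_min[OF R_sub]) (use R_inv G_D in auto)

lemma RG_P: assumes xRG: "x \<in> RG" and xP: "x \<in> P" shows "x = 0"
proof -
  let ?Q = "{x. \<exists>N M. N \<in> G \<and> M \<in> G \<and> M \<noteq> 0 \<and> x = N / M}"
  have Q: "is_subring_set ?Q"
  proof (rule is_subring_setI)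
    show "0 \<in> ?Q" by (intro CollectI exI[of _ 0] exI[of _ 1]) simp
    show "1 \<in> ?Q" by (intro CollectI exI[of _ 1] exI[of _ 1]) simp
    show "- x \<in> ?Q" if hx: "x \<in> ?Q" for x
    proof -
      obtain N M where h: "N \<in> G" "M \<in> G" "M \<noteq> 0" "x = N / M" using hx by blast
      have "- x = (- N) / M" using h(4) by simp
      moreover have "- N \<in> G" using h by simp
      ultimately show ?thesis using h by blast
    qed
    show "x + y \<in> ?Q" if hxy: "x \<in> ?Q" "y \<in> ?Q" for x y
    proof -
      obtain N1 M1 where h1: "N1 \<in> G" "M1 \<in> G" "M1 \<noteq> 0" "x = N1 / M1" using hxy(1) by blast
      obtain N2 M2 where h2: "N2 \<in> G" "M2 \<in> G" "M2 \<noteq> 0" "y = N2 / M2" using hxy(2) by blast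
      note h = h1 h2
      have "x + y = (N1 * M2 + N2 * M1) / (M1 * M2)" using h by (simp add: add_frac_eq)
      moreover have "N1 * M2 + N2 * M1 \<in> G" "M1 * M2 \<in> G" "M1 * M2 \<noteq> 0" using h by simp_all
      ultimately show ?thesis by blast
    qed
    show "x * y \<in> ?Q" if hxy: "x \<in> ?Q" "y \<in> ?Q" for x y
    proof -
      obtain N1 M1 where h1: "N1 \<in> G" "M1 \<in> G" "M1 \<noteq> 0" "x = N1 / M1" using hxy(1) by blast
      obtain N2 M2 where h2: "N2 \<in> G" "M2 \<in> G" "M2 \<noteq> 0" "y = N2 / M2" using hxy(2) by blast
      note h = h1 h2
      have "x * y = (N1 * N2) / (M1 * M2)" using h by simp
      moreover have "N1 * N2 \<in> G" "M1 * M2 \<in> G" "M1 * M2 \<noteq> 0" using h by simp_all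
      ultimately show ?thesis by blast
    qed
  qed
  have "RG \<subseteq> ?Q"
    unfolding recip_compl_def[of G]
  proof (rule gs_min[OF Q], rule subsetI)
    fix y assume "y \<in> {inverse a | a. a \<in> G \<and> a \<noteq> 0}"
    then obtain a where a: "a \<in> G" "a \<noteq> 0" "y = inverse a" by blast
    moreover have "inverse a = 1 / a" by (simp add: divide_inverse)
    ultimately show "y \<in> ?Q" using G_1 by blast
  qed
  with xRG obtain N M where NM: "N \<in> G" "M \<in> G" "M \<noteq> 0" "x = N / M" by blast
  show "x = 0"
  proof (rule ccontr)
    assume "x \<noteq> 0"
    hence "N \<noteq> 0" using NM by auto
    have "inverse N \<in> R" using R_inv NM G_D by blast
    hence "x * inverse N \<in> P" using Pmul' xP by blast
    moreover have "x * inverse N = inverse M" using NM \<open>N \<noteq> 0\<close> by (simp add: field_simps)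
    ultimately show False using NM by (auto simp: G_def)
  qed
qed

lemma R_split: assumes xR: "x \<in> R" shows "\<exists>r\<in>RG. \<exists>q\<in>P. x = r + q"
proof -
  let ?S = "{x. \<exists>r\<in>RG. \<exists>q\<in>P. x = r + q}"
  have S: "is_subring_set ?S"
  proof (rule is_subring_setI)
    have "(0::'k) = 0 + 0" by simp
    thus "0 \<in> ?S" using P0 RG_0 by blast
    have "(1::'k) = 1 + 0" by simp
    thus "1 \<in> ?S" using P0 RG_1 by blast
    show "- x \<in> ?S" if hx: "x \<in> ?S" for x
    proof -
      obtain r q where h: "r \<in> RG" "q \<in> P" "x = r + q" using hx by blast
      have "- x = - r + - q" using h by simp
      moreover have "- r \<in> RG" "- q \<in> P" using h Pneg by simp_all
      ultimately show ?thesis by blast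
    qed
    show "x + y \<in> ?S" if hx: "x \<in> ?S" "y \<in> ?S" for x y
    proof -
      obtain r1 q1 where h1: "r1 \<in> RG" "q1 \<in> P" "x = r1 + q1" using hx(1) by blast
      obtain r2 q2 where h2: "r2 \<in> RG" "q2 \<in> P" "y = r2 + q2" using hx(2) by blast
      have "x + y = (r1 + r2) + (q1 + q2)" using h1 h2 by (simp add: algebra_simps)
      moreover have "r1 + r2 \<in> RG" "q1 + q2 \<in> P" using h1 h2 Padd by simp_all
      ultimately show ?thesis by blast
    qed
    show "x * y \<in> ?S" if hx: "x \<in> ?S" "y \<in> ?S" for x y
    proof -
      obtain r1 q1 where h1: "r1 \<in> RG" "q1 \<in> P" "x = r1 + q1" using hx(1) by blast
      obtain r2 q2 where h2: "r2 \<in> RG" "q2 \<in> P" "y = r2 + q2" using hx(2) by blast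
      have R: "r1 \<in> R" "r2 \<in> R" "q1 \<in> R" using h1 h2 RG_R PR by auto
      have "r1 * q2 \<in> P" "q1 * r2 \<in> P" "q1 * q2 \<in> P"
        using Pmul[OF h2(2) R(1)] Pmul'[OF h1(2) R(2)] Pmul[OF h2(2) R(3)] by simp_all
      hence "r1 * q2 + q1 * r2 + q1 * q2 \<in> P" using Padd by blast
      moreover have "x * y = r1 * r2 + (r1 * q2 + q1 * r2 + q1 * q2)" using h1 h2 by (simp add: algebra_simps)
      moreover have "r1 * r2 \<in> RG" using h1 h2 by simp
      ultimately show ?thesis by blast
    qed
  qed
  have "R \<subseteq> ?S"
    unfolding recip_compl_def[of D]
  proof (rule gs_min[OF S], rule subsetI)
    fix y assume "y \<in> {inverse a | a. a \<in> D \<and> a \<noteq> 0}"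
    then obtain a where a: "a \<in> D" "a \<noteq> 0" "y = inverse a" by blast
    show "y \<in> ?S"
    proof (cases "a \<in> G")
      case True
      hence "inverse a \<in> RG" by (rule RG_inv)
      moreover have "inverse a = inverse a + 0" by simp
      ultimately show ?thesis using P0 a(3) by blast
    next
      case False
      hence "inverse a \<in> P" using a by (auto simp: G_def)
      moreover have "inverse a = 0 + inverse a" by simp
      ultimately show ?thesis using RG_0 a(3) by blast
    qed
  qed
  thus ?thesis using xR by blast
qed

lemma RG_inj: "x \<in> RG \<Longrightarrow> y \<in> RG \<Longrightarrow> x - y \<in> P \<Longrightarrow> x = y"
  using RG_P[of "x - y"] by auto

lemma lift: assumes "x \<in> R" shows "\<exists>r\<in>RG. x - r \<in> P"
proof -
  obtain r q where "r \<in> RG" "q \<in> P" "x = r + q" using R_split[OF assms] by blast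
  moreover have "x - r = q" using \<open>x = r + q\<close> by simp
  ultimately have "r \<in> RG" "x - r \<in> P" by simp_all
  thus ?thesis by blast
qed

lemma tpow: "t ^ n \<notin> P"
proof (induction n)
  case 0 then show ?case using P1 by simp
next
  case (Suc n)
  then show ?case using Pprime[of t "t ^ n"] tP tR sub_pow[OF R_sub tR] by auto
qed

lemma no_higher:
  assumes ab: "a < b" and U: "U \<in> R" "V \<in> R" "U * V - 1 \<in> P" and z: "z \<in> R"
    and h: "t ^ a * U - t ^ b * z \<in> P"
  shows False
proof -
  have "t ^ a * U - t ^ b * z = t ^ a * (U - t ^ (b - a) * z)"
    using ab by (simp add: algebra_simps flip: power_add)
  hence "t ^ a * (U - t ^ (b - a) * z) \<in> P" using h by simp
  moreover have "t ^ a \<in> R" "U - t ^ (b - a) * z \<in> R" using tR U z by simp_all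
  ultimately have "U - t ^ (b - a) * z \<in> P" using Pprime tpow by blast
  hence "(U - t ^ (b - a) * z) * V \<in> P" using Pmul' U by blast
  hence "(U * V - 1) - (U - t ^ (b - a) * z) * V \<in> P" using Pdiff U by blast
  moreover have "(U * V - 1) - (U - t ^ (b - a) * z) * V = t * (t ^ (b - a - 1) * z * V) - 1"
  proof -
    have "b - a = Suc (b - a - 1)" using ab by simp
    hence "t ^ (b - a) = t * t ^ (b - a - 1)" by (metis power_Suc)
    thus ?thesis by (simp add: algebra_simps)
  qed
  moreover have "t ^ (b - a - 1) * z * V \<in> R" using tR z U by simp
  ultimately show False using tnu by auto
qed

lemma unitZ:
  assumes g: "g \<in> G" "g \<noteq> 0" and y: "y \<in> R" "inverse g * y - 1 \<in> P"
  shows "g \<in> K"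
proof -
  obtain y' where y': "y' \<in> RG" "y - y' \<in> P" using lift y by blast
  have gD: "g \<in> D" using g G_D by blast
  have e: "inverse g * y' - 1 = (inverse g * y - 1) - inverse g * (y - y')" by (simp add: algebra_simps)
  have "inverse g * (y - y') \<in> P" using Pmul y'(2) R_inv[OF gD] by blast
  hence "(inverse g * y - 1) - inverse g * (y - y') \<in> P" using Pdiff y(2) by blast
  hence "inverse g * y' - 1 \<in> P" by (simp only: e)
  moreover have "inverse g * y' \<in> RG" using RG_inv[OF g(1)] y'(1) by simp
  ultimately have "inverse g * y' = 1" using RG_inj RG_1 by blast
  hence "g = y'" using g by (simp add: field_simps)
  hence "g \<in> R" using y' RG_R by blast
  thus ?thesis using gD K_eq by blast
qed

lemma R_ind: assumes "is_subring_set T" "\<And>a. a \<in> D \<Longrightarrow> a \<noteq> 0 \<Longrightarrow> inverse a \<in> T"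
  shows "R \<subseteq> T"
  unfolding recip_compl_def by (rule gs_min[OF assms(1)]) (use assms(2) in blast)

lemma KR: "c \<in> K \<Longrightarrow> c \<in> R" using K_eq by blast

lemma Res: assumes xR: "x \<in> R" shows "\<exists>c\<in>K. \<exists>w\<in>R. x - c - t * w \<in> P"
proof -
  let ?T = "{x \<in> R. \<exists>c\<in>K. \<exists>w\<in>R. x - c - t * w \<in> P}"
  have T: "is_subring_set ?T"
  proof (rule is_subring_setI)
    have "(0::'k) - 0 - t * 0 = 0" by simp
    thus "0 \<in> ?T" using P0 K_0 R_0 by (metis (mono_tags, lifting) mem_Collect_eq)
    have "(1::'k) - 1 - t * 0 = 0" by simp
    thus "1 \<in> ?T" using P0 K_1 R_0 R_1 by (metis (mono_tags, lifting) mem_Collect_eq)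
    show "- x \<in> ?T" if hx: "x \<in> ?T" for x
    proof -
      obtain c w where h: "x \<in> R" "c \<in> K" "w \<in> R" "x - c - t * w \<in> P" using hx by blast
      have e: "- x - (- c) - t * (- w) = - (x - c - t * w)" by simp
      have "- x - (- c) - t * (- w) \<in> P" unfolding e by (rule Pneg[OF h(4)])
      moreover have "- x \<in> R" "- c \<in> K" "- w \<in> R" using h by simp_all
      ultimately show ?thesis by blast
    qed
    show "x + y \<in> ?T" if hx: "x \<in> ?T" "y \<in> ?T" for x y
    proof -
      obtain c1 w1 where h1: "x \<in> R" "c1 \<in> K" "w1 \<in> R" "x - c1 - t * w1 \<in> P" using hx(1) by blast
      obtain c2 w2 where h2: "y \<in> R" "c2 \<in> K" "w2 \<in> R" "y - c2 - t * w2 \<in> P" using hx(2) by blast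
      have e: "(x + y) - (c1 + c2) - t * (w1 + w2) = (x - c1 - t * w1) + (y - c2 - t * w2)"
        by (simp add: algebra_simps)
      have "(x + y) - (c1 + c2) - t * (w1 + w2) \<in> P" unfolding e by (rule Padd[OF h1(4) h2(4)])
      moreover have "x + y \<in> R" "c1 + c2 \<in> K" "w1 + w2 \<in> R" using h1 h2 by simp_all
      ultimately show ?thesis by blast
    qed
    show "x * y \<in> ?T" if hx: "x \<in> ?T" "y \<in> ?T" for x y
    proof -
      obtain c1 w1 where h1: "x \<in> R" "c1 \<in> K" "w1 \<in> R" "x - c1 - t * w1 \<in> P" using hx(1) by blast
      obtain c2 w2 where h2: "y \<in> R" "c2 \<in> K" "w2 \<in> R" "y - c2 - t * w2 \<in> P" using hx(2) by blast
      let ?w = "c1 * w2 + w1 * c2 + t * w1 * w2"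
      have e: "x * y - c1 * c2 - t * ?w = (x - c1 - t * w1) * y + (c1 + t * w1) * (y - c2 - t * w2)"
        by (simp add: algebra_simps)
      have "(x - c1 - t * w1) * y \<in> P" using Pmul'[OF h1(4) h2(1)] .
      moreover have "c1 + t * w1 \<in> R" using h1 KR tR by simp
      hence "(c1 + t * w1) * (y - c2 - t * w2) \<in> P" using Pmul[OF h2(4)] by blast
      ultimately have "x * y - c1 * c2 - t * ?w \<in> P" using Padd by (simp only: e)
      moreover have "?w \<in> R" using h1 h2 KR tR by simp
      moreover have "x * y \<in> R" "c1 * c2 \<in> K" using h1 h2 by simp_all
      ultimately show ?thesis by blast
    qed
  qed
  have "R \<subseteq> ?T"
  proof (rule R_ind[OF T])
    fix a assume a: "a \<in> D" "a \<noteq> 0"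
    have aR: "inverse a \<in> R" using R_inv a by blast
    show "inverse a \<in> ?T"
    proof (cases "inverse a \<in> P")
      case True
      hence "inverse a - 0 - t * 0 \<in> P" by simp
      then show ?thesis using aR K_0 R_0 by blast
    next
      case False
      then obtain n u v where nu: "u \<in> R" "v \<in> R" "u * v - 1 \<in> P" "inverse a - t ^ n * u \<in> P"
        using dvr aR by blast
      show ?thesis
      proof (cases n)
        case 0
        have e: "inverse a * v - 1 = (u * v - 1) + (inverse a - t ^ n * u) * v" using 0 by (simp add: algebra_simps)
        have "(inverse a - t ^ n * u) * v \<in> P" using Pmul'[OF nu(4) nu(2)] .
        hence "inverse a * v - 1 \<in> P" using Padd[OF nu(3)] by (simp only: e)
        moreover have "a \<in> G" using a False by (simp add: G_def)
        ultimately have "a \<in> K" using unitZ[of a v] a nu by blast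
        hence "inverse a \<in> K" by (rule K_inv)
        moreover have "inverse a - inverse a - t * 0 \<in> P" using P0 by simp
        ultimately show ?thesis using aR R_0 by blast
      next
        case (Suc k)
        have e: "inverse a - 0 - t * (t ^ k * u) = inverse a - t ^ n * u" using Suc by simp
        have "inverse a - 0 - t * (t ^ k * u) \<in> P" unfolding e by (rule nu(4))
        moreover have "t ^ k * u \<in> R" using tR nu by simp
        ultimately show ?thesis using aR K_0 by blast
      qed
    qed
  qed
  thus ?thesis using xR by blast
qed

end



context ctx begin

lemmas KFc = sub_closed[OF KF_sub]
lemma KF_0 [simp]: "0 \<in> KF" by (rule KFc(1))
lemma KF_add [simp]: "x \<in> KF \<Longrightarrow> y \<in> KF \<Longrightarrow> x + y \<in> KF" by (rule KFc(3))
lemma KF_mul [simp]: "x \<in> KF \<Longrightarrow> y \<in> KF \<Longrightarrow> x * y \<in> KF" by (rule KFc(4))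
lemma KF_pow [simp]: "x \<in> KF \<Longrightarrow> x ^ n \<in> KF" by (rule sub_pow[OF KF_sub])

lemma key_eq0:
  fixes g c F :: "'a::field"
  assumes g: "g \<noteq> 0" and c: "c \<noteq> 0" and F: "F \<noteq> 0" and h: "g - F * inverse c \<noteq> 0"
  shows "inverse (g - F * inverse c) * (c * inverse F - inverse g) = c * inverse g * inverse F"
proof -
  define h where "h = g - F * inverse c"
  have "c * inverse F - inverse g = c * h * inverse (F * g)"
    unfolding h_def using g c F by (simp add: field_simps)
  hence "inverse h * (c * inverse F - inverse g) = (inverse h * h) * (c * inverse (F * g))"
    by (simp add: ac_simps)
  also have "\<dots> = c * inverse g * inverse F" using h unfolding h_def by (simp add: ac_simps)
  finally show ?thesis unfolding h_def .
qed

lemma key_eq: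
  assumes g: "g \<noteq> 0" and c: "c \<noteq> 0" and h: "g - f ^ n * inverse c \<noteq> 0"
  shows "inverse (g - f ^ n * inverse c) * (c * t ^ n - inverse g) = c * inverse g * t ^ n"
  using key_eq0[OF g c _ h] f_nz by (simp add: power_inverse)

lemma core:
  "g \<in> G \<Longrightarrow> g \<noteq> 0 \<Longrightarrow> u \<in> R \<Longrightarrow> v \<in> R \<Longrightarrow> u * v - 1 \<in> P \<Longrightarrow> inverse g - t ^ n * u \<in> P \<Longrightarrow> g \<in> KF"
proof (induction n arbitrary: g u v rule: less_induct)
  case (less n)
  have gD: "g \<in> D" using less.prems(1) G_D by blast
  have xR: "inverse g \<in> R" using R_inv[OF gD] .
  show ?case
  proof (cases n)
    case 0
    have e: "inverse g * v - 1 = (u * v - 1) + (inverse g - t ^ n * u) * v" using 0 by (simp add: algebra_simps)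
    have "(inverse g - t ^ n * u) * v \<in> P" using Pmul'[OF less.prems(6) less.prems(4)] .
    hence "inverse g * v - 1 \<in> P" using Padd[OF less.prems(5)] by (simp only: e)
    hence "g \<in> K" using unitZ less.prems by blast
    thus ?thesis using K_KF by blast
  next
    case (Suc k)
    obtain c w where cw: "c \<in> K" "w \<in> R" "u - c - t * w \<in> P" using Res[OF less.prems(3)] by blast
    have cR: "c \<in> R" using KR cw(1) .
    have c0: "c \<noteq> 0"
    proof
      assume "c = 0"
      hence uw: "u - t * w \<in> P" using cw(3) by simp
      have e: "t * (w * v) - 1 = (u * v - 1) - (u - t * w) * v" by (simp add: algebra_simps)
      have "(u - t * w) * v \<in> P" using Pmul'[OF uw less.prems(4)] .
      hence "t * (w * v) - 1 \<in> P" using Pdiff[OF less.prems(5)] by (simp only: e)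
      moreover have "w * v \<in> R" using cw(2) less.prems(4) by simp
      ultimately show False using tnu by blast
    qed
    define h where "h = g - f ^ n * inverse c"
    have icK: "inverse c \<in> K" using K_inv cw(1) .
    have fG: "f \<in> G" using KF_G f_KF by blast
    have icG: "inverse c \<in> G" using K_G icK by blast
    have hG: "h \<in> G" unfolding h_def using less.prems(1) fG icG by simp
    have "inverse c \<in> KF" using K_KF icK by blast
    hence fnKF: "f ^ n * inverse c \<in> KF" using f_KF by simp
    have gh: "g = h + f ^ n * inverse c" unfolding h_def by simp
    show ?thesis
    proof (cases "h = 0")
      case True
      then show ?thesis using gh fnKF by simp
    next
      case False
      have hD: "h \<in> D" using hG G_D by blast
      have ihP: "inverse h \<notin> P" using hG False by (simp add: G_def)
      have ihR: "inverse h \<in> R" using R_inv[OF hD] .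
      obtain m u' v' where muv: "u' \<in> R" "v' \<in> R" "u' * v' - 1 \<in> P" "inverse h - t ^ m * u' \<in> P"
        using dvr ihR ihP by blast
      show ?thesis
      proof (cases "m < n")
        case True
        have "h \<in> KF" using less.IH[OF True hG False muv] .
        thus ?thesis using gh fnKF by simp
      next
        case False
        let ?x = "inverse g" and ?A = "inverse h" and ?B = "c * t ^ n - inverse g"
        have eq: "?A * ?B = c * ?x * t ^ n"
          unfolding h_def by (rule key_eq[OF less.prems(2) c0]) (use \<open>h \<noteq> 0\<close> h_def in simp)
        have BR: "?B \<in> R" using cR tR xR by simp
        have tnR: "t ^ n \<in> R" using tR by simp
        have al: "?A - t ^ m * u' \<in> P" using muv(4) .
        have ga: "?x - t ^ n * u \<in> P" using less.prems(6) .
        have eb: "?B + t ^ (n + 1) * w = - (?x - t ^ n * u) - t ^ n * (u - c - t * w)"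
          by (simp add: algebra_simps)
        have "t ^ n * (u - c - t * w) \<in> P" using Pmul[OF cw(3) tnR] .
        hence be: "?B + t ^ (n + 1) * w \<in> P" using Pdiff[OF Pneg[OF ga]] by (simp only: eb)
        have p1: "t ^ m * u' * (?B + t ^ (n + 1) * w) \<in> P" using Pmul[OF be] tR muv(1) by simp
        have p2: "(?A - t ^ m * u') * ?B \<in> P" using Pmul'[OF al BR] .
        have p3: "c * t ^ n * (?x - t ^ n * u) \<in> P" using Pmul[OF ga] cR tR by simp
        have "t ^ m * u' * (?B + t ^ (n + 1) * w) + (?A - t ^ m * u') * ?B - c * t ^ n * (?x - t ^ n * u)
            = (?A * ?B - c * ?x * t ^ n) + t ^ (n + n) * (c * u) + t ^ (m + n + 1) * (u' * w)"
          by (simp add: algebra_simps power_add)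
        also have "\<dots> = t ^ (n + n) * (c * u) - t ^ (m + n + 1) * (- (u' * w))"
          using eq by simp
        finally have E: "t ^ (n + n) * (c * u) - t ^ (m + n + 1) * (- (u' * w)) \<in> P"
          using Padd[OF p1 p2] Pdiff p3 by metis
        have U: "c * u \<in> R" "inverse c * v \<in> R" using cR KR[OF icK] less.prems(3,4) by simp_all
        have e3: "c * u * (inverse c * v) - 1 = u * v - 1" using c0 by (simp add: field_simps)
        have U3: "c * u * (inverse c * v) - 1 \<in> P" unfolding e3 by (rule less.prems(5))
        have z: "- (u' * w) \<in> R" using muv(1) cw(2) by simp
        have "n + n < m + n + 1" using False by simp
        from no_higher[OF this U U3 z E] show ?thesis ..
      qed
    qed
  qed
qed

lemma G_eq: "G = KF"
proof
  show "KF \<subseteq> G" by (rule KF_G)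
  show "G \<subseteq> KF"
  proof
    fix g assume g: "g \<in> G"
    show "g \<in> KF"
    proof (cases "g = 0")
      case False
      have gD: "g \<in> D" using g G_D by blast
      have "inverse g \<notin> P" using g False by (simp add: G_def)
      then obtain n u v where "u \<in> R" "v \<in> R" "u * v - 1 \<in> P" "inverse g - t ^ n * u \<in> P"
        using dvr R_inv[OF gD] by blast
      thus ?thesis using core g False by blast
    qed simp
  qed
qed

end



theorem mainTheorem11:
  fixes D :: "'k::field set" and f :: 'k and P :: "'k set"
  assumes "is_subring_set D"
    and "E_simple D"
    and "f \<in> D" and "f \<notin> max_subfield D"
    and "is_pf D f P"
    and "DVR (ring_of (recip_compl D) Quot P)"
    and "ring_irreducible\<^bsub>ring_of (recip_compl D) Quot P\<^esub> (P +>\<^bsub>ring_of (recip_compl D)\<^esub> inverse f)"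
  shows "(\<forall>g \<in> D - {0}. inverse g \<notin> P \<longleftrightarrow> g \<in> adjoin (max_subfield D) f)
    \<and> recip_compl D = {a + b | a b. a \<in> recip_compl (adjoin (max_subfield D) f) \<and> b \<in> P}
    \<and> recip_compl (adjoin (max_subfield D) f) \<inter> P = {0}"
proof -
  have Rs: "is_subring_set (recip_compl D)" unfolding recip_compl_def by (rule gs_subring)
  have pi: "primeideal P (ring_of (recip_compl D))" and tP: "inverse f \<notin> P"
    using assms(5) unfolding is_pf_def by blast+
  have f0: "f \<noteq> 0" using assms(4) unfolding max_subfield_def by blast
  have tR: "inverse f \<in> recip_compl D"
    unfolding recip_compl_def by (rule gs_gen) (use assms(3) f0 in blast)
  note Pf = P_facts[OF Rs pi]
  note dc = dvr_concrete[OF Rs pi assms(6) assms(7) tR]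
  interpret ctx D f P
    by (unfold_locales) (use assms(1-4) Pf tP dc in \<open>blast+\<close>)
  have RGe: "RG = recip_compl KF" using G_eq by simp
  have c1: "\<forall>g \<in> D - {0}. inverse g \<notin> P \<longleftrightarrow> g \<in> KF"
    using G_eq unfolding G_def by blast
  have c2: "R = {a + b | a b. a \<in> recip_compl KF \<and> b \<in> P}"
  proof
    show "R \<subseteq> {a + b | a b. a \<in> recip_compl KF \<and> b \<in> P}"
      using R_split RGe by blast
    show "{a + b | a b. a \<in> recip_compl KF \<and> b \<in> P} \<subseteq> R"
    proof
      fix x assume "x \<in> {a + b | a b. a \<in> recip_compl KF \<and> b \<in> P}"
      then obtain a b where ab: "x = a + b" "a \<in> RG" "b \<in> P" using RGe by blast
      have "a \<in> R" "b \<in> R" using ab RG_R PR by blast+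
      thus "x \<in> R" using ab(1) by simp
    qed
  qed
  have c3: "recip_compl KF \<inter> P = {0}"
    using RG_P RGe RG_0 P0 by blast
  show ?thesis using c1 c2 c3 by blast
qed


end
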